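(* Let $a,b,c,d$ be four points on the unit circle, lying in this order along the circle, such that $L[a,b]$ and $L[c,d]$ are not parallel. Let $h$ be a point of the open segment $(b,c)$, and set $g=\mathrm{LIS}[a,b,c,d]$, $j=\mathrm{LIS}[g,h,a,c]$, $k=\mathrm{LIS}[g,h,b,d]$, $l=\mathrm{LIS}[g,h,a,d]$. Then $v_{\mathbb{B}^2}(h,j)=v_{\mathbb{B}^2}(k,l)$ and $v_{\mathbb{B}^2}(h,k)=v_{\mathbb{B}^2}(j,l)$.
   Context: $\mathbb{B}^2$ is the open unit disk in $\mathbb{C}$. For points $p,q,r,s$ with $p\ne q$, $r\ne s$, $\mathrm{LIS}[p,q,r,s]$ denotes the unique intersection point of the line $L[p,q]$ through $p,q$ and the line $L[r,s]$ through $r,s$. The visual angle metric is $v_{\mathbb{B}^2}(x,y)=\sup\{\measuredangle(x,z,y): z\in\partial\mathbb{B}^2\}$, where $\measuredangle(x,z,y)$ is the angle at $z$ between the segments $[z,x]$ and $[z,y]$. *)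

theory Defs
  imports "HOL-Analysis.Analysis"
begin

definition vangle_at :: "complex \<Rightarrow> complex \<Rightarrow> complex \<Rightarrow> real" where
  "vangle_at x z y = arccos ((Re ((x - z) * cnj (y - z))) / (cmod (x - z) * cmod (y - z)))"

definition line_through :: "complex \<Rightarrow> complex \<Rightarrow> complex set" where
  "line_through p q = {p + of_real t * (q - p) | t. t \<in> (UNIV :: real set)}"

definition lines_parallel :: "complex \<Rightarrow> complex \<Rightarrow> complex \<Rightarrow> complex \<Rightarrow> bool" where
  "lines_parallel p q r s \<longleftrightarrow> (\<exists>t::real. s - r = of_real t * (q - p))"

definition LIS :: "complex \<Rightarrow> complex \<Rightarrow> complex \<Rightarrow> complex \<Rightarrow> complex" where
  "LIS p q r s = (THE z. z \<in> line_through p q \<and> z \<in> line_through r s)"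

definition visual_angle_metric :: "complex \<Rightarrow> complex \<Rightarrow> real" where
  "visual_angle_metric x y = (SUP z \<in> sphere 0 1. vangle_at x z y)"

definition in_circle_order :: "complex \<Rightarrow> complex \<Rightarrow> complex \<Rightarrow> complex \<Rightarrow> bool" where
  "in_circle_order a b c d \<longleftrightarrow>
     (\<exists>s t u w. s < t \<and> t < u \<and> u < w \<and> w < s + 2 * pi \<and>
        ((a = cis s \<and> b = cis t \<and> c = cis u \<and> d = cis w) \<or>
         (d = cis s \<and> c = cis t \<and> b = cis u \<and> a = cis w)))"

end

theory Submission
  imports Defs
begin

lemma chord_norm:
  assumes "cmod p = 1" "cmod q = 1"
  shows "(cmod (p + of_real r * (q - p)))^2 = 1 + r*(r-1)*(cmod(q-p))^2"
proof -
  have p: "(Re p)^2 + (Im p)^2 = 1" using assms(1) by (simp add: cmod_power2[symmetric])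
  have q: "(Re q)^2 + (Im q)^2 = 1" using assms(2) by (simp add: cmod_power2[symmetric])
  show ?thesis unfolding cmod_power2 using p q by (simp add: power2_eq_square algebra_simps) algebra
qed

lemma real_mult_of:
  assumes "Im (cnj v * w) = 0" "v \<noteq> 0"
  shows "w = of_real (Re (cnj v * w) / (cmod v)^2) * v"
proof -
  have e: "cnj v * w = of_real (Re (cnj v * w))" using assms(1) by (simp add: complex_eq_iff)
  have n: "complex_of_real ((cmod v)^2) = v * cnj v" by (rule complex_norm_square)
  have "v * cnj v \<noteq> 0" using assms(2) by simp
  then have "w = (cnj v * w) * v / (v * cnj v)" by (simp add: field_simps)
  also have "\<dots> = of_real (Re (cnj v * w)) * v / of_real ((cmod v)^2)" using e n by simp
  finally show ?thesis by (simp add: field_simps)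
qed

lemma norm_line_sq:
  "(cmod (g + of_real s * v))^2 = (cmod g)^2 + 2 * s * Re (g * cnj v) + s^2 * (cmod v)^2"
  unfolding cmod_power2 by (simp add: power2_eq_square algebra_simps)

definition PP :: "complex \<Rightarrow> real" where "PP g = (cmod g)^2 - 1"
definition KK :: "complex \<Rightarrow> complex \<Rightarrow> real" where "KK g v = Re (g * cnj v)"
definition DD :: "complex \<Rightarrow> complex \<Rightarrow> complex \<Rightarrow> complex" where
  "DD g v x = of_real (PP g) * cnj v + of_real (2 * KK g v) * cnj (x - g)"
definition FF :: "complex \<Rightarrow> complex \<Rightarrow> complex \<Rightarrow> complex" where
  "FF g v x = g - of_real (PP g) * v * cnj (x - g) / DD g v x"

lemma FF_diff:
  assumes "DD g v x \<noteq> 0" "DD g v z \<noteq> 0"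
  shows "FF g v x - FF g v z = - complex_of_real (PP g * PP g) * v * cnj v * cnj (x - z) / (DD g v x * DD g v z)"
  using assms unfolding FF_def DD_def by (simp add: field_simps)

lemma twoK: "complex_of_real (2 * KK g v) = g * cnj v + cnj g * v"
proof -
  have "g * cnj v + cnj (g * cnj v) = complex_of_real (2 * Re (g * cnj v))" by (rule complex_add_cnj)
  then show ?thesis by (simp add: KK_def mult.commute)
qed

lemma PPc: "complex_of_real (PP g) = g * cnj g - 1"
  using complex_norm_square[of g] by (simp add: PP_def)


lemma DD_sphere:
  assumes "cmod z = 1" "PP g > 0" "v \<noteq> 0"
  shows "DD g v z \<noteq> 0"
proof
  assume D: "DD g v z = 0"
  have K: "KK g v \<noteq> 0"
  proof
    assume "KK g v = 0"
    then have "DD g v z = of_real (PP g) * cnj v" by (simp add: DD_def)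
    then show False using D assms by simp
  qed
  define s where "s = - PP g / (2 * KK g v)"
  have "cnj (z - g) = of_real s * cnj v"
    using D K unfolding DD_def s_def by (simp add: field_simps)
  then have "cnj (cnj (z - g)) = cnj (of_real s * cnj v)" by simp
  then have "z - g = of_real s * v" by simp
  then have zz: "z = g + of_real s * v" by (simp add: algebra_simps)
  have "(cmod z)^2 = (cmod g)^2 + 2 * s * KK g v + s^2 * (cmod v)^2"
    using norm_line_sq zz by (simp add: KK_def)
  also have "2 * s * KK g v = - PP g" using K by (simp add: s_def)
  finally have "(cmod z)^2 = 1 + s^2 * (cmod v)^2" by (simp add: PP_def)
  moreover have "s \<noteq> 0" using assms(2) K by (simp add: s_def)
  ultimately have "(cmod z)^2 > 1" using assms(3) by (simp add: add_pos_pos)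
  then show False using assms(1) by simp
qed

lemma ring_id1:
  fixes g G v V c C P K :: complex
  assumes "P = g * G - 1" "K = g * V + G * v"
  shows "(g * (P * V + K * c) - P * v * c) * (G * (P * v + K * C) - P * V * C)
         - (P * V + K * c) * (P * v + K * C) = P * P * v * V * ((c + G) * (C + g) - 1)"
  unfolding assms by algebra

lemma FF_norm:
  assumes "cmod z = 1" "PP g > 0" "v \<noteq> 0"
  shows "cmod (FF g v z) = 1"
proof -
  define D where "D = DD g v z"
  define N where "N = g * D - of_real (PP g) * v * cnj (z - g)"
  have D0: "DD g v z \<noteq> 0" using DD_sphere assms by blast
  have F: "FF g v z = N / D" unfolding FF_def N_def D_def using D0 by (simp add: field_simps)
  have zz: "z * cnj z = 1" using assms(1) complex_norm_square[of z] by simp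
  have cN: "cnj N = cnj g * cnj D - of_real (PP g) * cnj v * (z - g)" by (simp add: N_def)
  have cD: "cnj D = of_real (PP g) * v + of_real (2 * KK g v) * (z - g)" by (simp add: D_def DD_def)
  note R = ring_id1[OF PPc[of g] twoK[of g v], where c = "cnj (z - g)" and C = "z - g"]
  have "N * cnj N - D * cnj D = of_real (PP g) * of_real (PP g) * v * cnj v * ((cnj (z - g) + cnj g) * ((z - g) + g) - 1)"
    unfolding cN cD unfolding N_def D_def DD_def by (rule R)
  also have "\<dots> = 0" using zz by (simp add: mult.commute)
  finally have "N * cnj N = D * cnj D" by simp
  then have "complex_of_real ((cmod N)^2) = complex_of_real ((cmod D)^2)" by (simp only: complex_norm_square)
  then have "(cmod N)^2 = (cmod D)^2" by (simp only: of_real_eq_iff)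
  then have "cmod N = cmod D" using power2_eq_iff_nonneg[of "cmod N" "cmod D"] by simp
  then show ?thesis using F D0 D_def by (simp add: norm_divide)
qed

lemma abs_id2:
  fixes P V v K w E :: complex
  assumes "E \<noteq> 0" "E = P * v + K * w"
  shows "P * V + K * (- P * V * w / E) = P * P * v * V / E"
proof -
  have "P * V + K * (- P * V * w / E) = P * V * (E - K * w) / E" using assms(1) by (simp add: field_simps)
  also have "E - K * w = P * v" using assms(2) by simp
  finally show ?thesis by (simp add: mult.commute mult.left_commute)
qed

lemma abs_id3:
  fixes P V v g w E :: complex
  assumes "E \<noteq> 0" "P \<noteq> 0" "v \<noteq> 0" "V \<noteq> 0"
  shows "g - P * v * (- P * V * w / E) / (P * P * v * V / E) = g + w"
  using assms by (simp add: field_simps)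

lemma FF_invol:
  assumes "DD g v z \<noteq> 0" "PP g > 0" "v \<noteq> 0"
  shows "DD g v (FF g v z) \<noteq> 0" "FF g v (FF g v z) = z"
proof -
  define E where "E = of_real (PP g) * v + of_real (2 * KK g v) * (z - g)"
  have cD: "cnj (DD g v z) = E" by (simp add: DD_def E_def)
  have E0: "E \<noteq> 0" using assms(1) cD by auto
  have c1: "cnj (FF g v z - g) = - of_real (PP g) * cnj v * (z - g) / E"
    by (simp add: FF_def cD[symmetric])
  have DF: "DD g v (FF g v z) = of_real (PP g) * of_real (PP g) * v * cnj v / E"
    unfolding DD_def c1 by (rule abs_id2[OF E0 E_def])
  show "DD g v (FF g v z) \<noteq> 0" unfolding DF using E0 assms by simp
  have "FF g v (FF g v z) = g + (z - g)"
    unfolding FF_def[of g v "FF g v z"] DF c1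
    by (rule abs_id3) (use E0 assms in auto)
  then show "FF g v (FF g v z) = z" by simp
qed

lemma FF_sphere_image:
  assumes "PP g > 0" "v \<noteq> 0"
  shows "FF g v ` sphere 0 1 = sphere 0 1"
proof
  show "FF g v ` sphere 0 1 \<subseteq> sphere 0 1" using FF_norm assms by auto
  show "sphere 0 1 \<subseteq> FF g v ` sphere 0 1"
  proof
    fix z :: complex assume z: "z \<in> sphere 0 1"
    then have "cmod z = 1" by simp
    then have "DD g v z \<noteq> 0" "cmod (FF g v z) = 1" using DD_sphere FF_norm assms by auto
    then have "FF g v (FF g v z) = z" "FF g v z \<in> sphere 0 1" using FF_invol assms by auto
    then show "z \<in> FF g v ` sphere 0 1" by (metis image_eqI)
  qed
qed


lemma vangle_scale:
  assumes "X' = \<alpha> * cnj X" "Y' = \<beta> * cnj Y" "\<alpha> * cnj \<beta> = of_real \<rho>" "\<rho> > 0"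
  shows "Re (X' * cnj Y') / (cmod X' * cmod Y') = Re (X * cnj Y) / (cmod X * cmod Y)"
proof -
  have "X' * cnj Y' = (\<alpha> * cnj \<beta>) * cnj (X * cnj Y)" using assms(1,2) by (simp add: mult_ac)
  then have r: "Re (X' * cnj Y') = \<rho> * Re (X * cnj Y)" using assms(3) by simp
  have "cmod \<alpha> * cmod \<beta> = \<rho>" using arg_cong[OF assms(3), of cmod] assms(4) by (simp add: norm_mult)
  moreover have "cmod X' * cmod Y' = (cmod \<alpha> * cmod \<beta>) * (cmod X * cmod Y)"
    using assms(1,2) by (simp add: norm_mult mult_ac)
  ultimately have m: "cmod X' * cmod Y' = \<rho> * (cmod X * cmod Y)" by simp
  show ?thesis unfolding r m using assms(4) by simp
qed

lemma DD_line:
  assumes "x - g = of_real s * v"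
  shows "DD g v x = cnj v * of_real (PP g + 2 * KK g v * s)"
proof -
  have "cnj (x - g) = of_real s * cnj v" using arg_cong[OF assms, of cnj] by simp
  then show ?thesis unfolding DD_def by (simp add: algebra_simps)
qed

lemma vangle_FF:
  assumes P: "PP g > 0" "v \<noteq> 0"
    and x: "x - g = of_real sx * v" and y: "y - g = of_real sy * v"
    and e: "(PP g + 2 * KK g v * sx) * (PP g + 2 * KK g v * sy) > 0"
    and z: "cmod z = 1"
  shows "vangle_at (FF g v x) (FF g v z) (FF g v y) = vangle_at x z y"
proof -
  define ex where "ex = PP g + 2 * KK g v * sx"
  define ey where "ey = PP g + 2 * KK g v * sy"
  have ex0: "ex \<noteq> 0" "ey \<noteq> 0" using e ex_def ey_def by auto
  have Dx: "DD g v x = cnj v * of_real ex" using DD_line[OF x] ex_def by simp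
  have Dy: "DD g v y = cnj v * of_real ey" using DD_line[OF y] ey_def by simp
  have Dz: "DD g v z \<noteq> 0" using DD_sphere[OF z P] .
  have Dx0: "DD g v x \<noteq> 0" and Dy0: "DD g v y \<noteq> 0" using Dx Dy ex0 P by auto
  define \<alpha> where "\<alpha> = - complex_of_real (PP g * PP g) * v * cnj v / (DD g v x * DD g v z)"
  define \<beta> where "\<beta> = - complex_of_real (PP g * PP g) * v * cnj v / (DD g v y * DD g v z)"
  have X: "FF g v x - FF g v z = \<alpha> * cnj (x - z)" unfolding \<alpha>_def FF_diff[OF Dx0 Dz] by simp
  have Y: "FF g v y - FF g v z = \<beta> * cnj (y - z)" unfolding \<beta>_def FF_diff[OF Dy0 Dz] by simp
  define \<rho> where "\<rho> = (PP g)^4 * (cmod v)^2 / (ex * ey * (cmod (DD g v z))^2)"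
  have nv: "v * cnj v = of_real ((cmod v)^2)" by (rule complex_norm_square[symmetric])
  have nD: "DD g v z * cnj (DD g v z) = of_real ((cmod (DD g v z))^2)" by (rule complex_norm_square[symmetric])
  have "\<alpha> * cnj \<beta> = complex_of_real ((PP g)^4) * (v * cnj v) * (v * cnj v) / ((v * cnj v) * of_real (ex * ey) * (DD g v z * cnj (DD g v z)))"
    unfolding \<alpha>_def \<beta>_def Dx Dy by (simp add: field_simps power4_eq_xxxx)
  also have "\<dots> = of_real \<rho>" unfolding nv nD \<rho>_def using P Dz ex0 by (simp add: field_simps power2_eq_square)
  finally have ab: "\<alpha> * cnj \<beta> = of_real \<rho>" .
  have \<rho>0: "\<rho> > 0" unfolding \<rho>_def using P Dz e ex_def ey_def by (simp add: mult_pos_pos)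
  show ?thesis unfolding vangle_at_def vangle_scale[OF X Y ab \<rho>0] ..
qed

lemma vam_FF:
  assumes P: "PP g > 0" "v \<noteq> 0"
    and x: "x - g = of_real sx * v" and y: "y - g = of_real sy * v"
    and e: "(PP g + 2 * KK g v * sx) * (PP g + 2 * KK g v * sy) > 0"
  shows "visual_angle_metric (FF g v x) (FF g v y) = visual_angle_metric x y"
proof -
  have "visual_angle_metric (FF g v x) (FF g v y) = (SUP z\<in>FF g v ` sphere 0 1. vangle_at (FF g v x) z (FF g v y))"
    unfolding visual_angle_metric_def FF_sphere_image[OF P] ..
  also have "\<dots> = (SUP z\<in>sphere 0 1. vangle_at (FF g v x) (FF g v z) (FF g v y))"
    by (simp add: image_image)
  also have "\<dots> = (SUP z\<in>sphere 0 1. vangle_at x z y)"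
    by (rule SUP_cong) (use vangle_FF[OF P x y e] in auto)
  finally show ?thesis unfolding visual_angle_metric_def .
qed

lemma vam_sym: "visual_angle_metric x y = visual_angle_metric y x"
proof -
  have "vangle_at x z y = vangle_at y z x" for z
  proof -
    have "Re ((x - z) * cnj (y - z)) = Re ((y - z) * cnj (x - z))" by (simp add: algebra_simps)
    then show ?thesis unfolding vangle_at_def by (simp add: mult.commute)
  qed
  then show ?thesis unfolding visual_angle_metric_def by simp
qed


definition NN :: "complex \<Rightarrow> complex \<Rightarrow> real" where
  "NN g x = ((cmod g)^2 + 1 - 2 * Re (x * cnj g)) / PP g"
definition TT :: "complex \<Rightarrow> complex \<Rightarrow> complex" where
  "TT g x = g + (x - g) / of_real (NN g x)"

lemma NN_num: "(cmod g)^2 + 1 - 2 * Re (x * cnj g) = (cmod (x - g))^2 + 1 - (cmod x)^2"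
  unfolding cmod_power2 by (simp add: power2_eq_square algebra_simps)

lemma NN_affine:
  assumes "PP g \<noteq> 0"
  shows "NN g (x + of_real t * (y - x)) = (1 - t) * NN g x + t * NN g y"
  using assms unfolding NN_def by (simp add: field_simps algebra_simps)

lemma abs_coll:
  fixes A B nx ny t W g :: complex
  assumes "nx \<noteq> 0" "ny \<noteq> 0" "W \<noteq> 0" "W = (1 - t) * nx + t * ny"
  shows "g + ((1 - t) * A + t * B) / W = g + A / nx + (t * ny / W) * (B / ny - A / nx)"
proof -
  have "A / nx + (t * ny / W) * (B / ny - A / nx) = (A * W + t * B * nx - t * ny * A) / (nx * W)"
    using assms(1-3) by (simp add: field_simps)
  also have "A * W + t * B * nx - t * ny * A = nx * ((1 - t) * A + t * B)" unfolding assms(4) by (simp add: algebra_simps)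
  finally show ?thesis using assms(1,3) by simp
qed

lemma TT_coll:
  assumes "PP g \<noteq> 0" "NN g x \<noteq> 0" "NN g y \<noteq> 0" "NN g (x + of_real t * (y - x)) \<noteq> 0"
  shows "TT g (x + of_real t * (y - x)) = TT g x + of_real (t * NN g y / NN g (x + of_real t * (y - x))) * (TT g y - TT g x)"
proof -
  have w: "x + of_real t * (y - x) - g = (1 - of_real t) * (x - g) + of_real t * (y - g)" by (simp add: algebra_simps)
  have n: "NN g (x + of_real t * (y - x)) = (1 - t) * NN g x + t * NN g y" by (rule NN_affine[OF assms(1)])
  have W: "complex_of_real (NN g (x + of_real t * (y - x))) = (1 - of_real t) * of_real (NN g x) + of_real t * of_real (NN g y)"
    unfolding n by simp
  show ?thesis unfolding TT_def w
    using abs_coll[OF _ _ _ W, where A = "x - g" and B = "y - g" and g = g] assms by simp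
qed

lemma NN_pos:
  assumes "cmod x \<le> 1" "x \<noteq> g" "PP g > 0"
  shows "NN g x > 0"
proof -
  have "(cmod (x - g))^2 > 0" using assms(2) by simp
  then have "(cmod g)^2 + 1 - 2 * Re (x * cnj g) > 0" unfolding NN_num using assms(1)
    by (smt (verit) abs_norm_cancel power_le_one)
  then show ?thesis unfolding NN_def using assms(3) by simp
qed

lemma TT_vieta:
  assumes "cmod p = 1" "cmod q = 1" "p \<noteq> q" "g = p + of_real r * (q - p)" "cmod g > 1"
  shows "TT g p = q"
proof -
  have gn: "(cmod g)^2 = 1 + r*(r-1)*(cmod(q-p))^2" using chord_norm[OF assms(1,2)] assms(4) by simp
  have qp: "(cmod (q - p))^2 > 0" using assms(3) by simp
  have "(cmod g)^2 > 1" using one_less_power[OF assms(5), of 2] by simp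
  then have rr: "r * (r - 1) > 0" using gn qp by (smt (verit) mult_nonpos_nonneg mult.commute)
  then have r0: "r \<noteq> 0" "r - 1 \<noteq> 0" by auto
  have PPe: "PP g = r*(r-1)*(cmod(q-p))^2" using gn by (simp add: PP_def)
  have pg: "p - g = - of_real r * (q - p)" using assms(4) by simp
  have "(cmod (p - g))^2 = r^2 * (cmod (q - p))^2" unfolding pg by (simp add: norm_mult power_mult_distrib)
  then have "NN g p = r^2 * (cmod (q - p))^2 / (r*(r-1)*(cmod(q-p))^2)"
    unfolding NN_def NN_num PPe using assms(1) by simp
  also have "\<dots> = (r * (cmod (q - p))^2) * r / ((r * (cmod (q - p))^2) * (r - 1))"
    by (simp add: power2_eq_square mult_ac)
  also have "\<dots> = r / (r - 1)" by (rule mult_divide_mult_cancel_left) (use qp r0 in simp)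
  finally have N: "NN g p = r / (r - 1)" .
  have "TT g p = g + (p - g) / of_real (r / (r - 1))" unfolding TT_def N ..
  also have "\<dots> = q" unfolding pg assms(4) using r0 by (simp add: field_simps)
  finally show ?thesis .
qed

lemma TT_FF_line:
  assumes "x - g = of_real s * v" "PP g + 2 * KK g v * s \<noteq> 0" "PP g \<noteq> 0" "v \<noteq> 0"
  shows "TT g x = FF g v x" "TT g x = g + of_real (- PP g * s / (PP g + 2 * KK g v * s)) * v"
proof -
  have xg: "x = g + of_real s * v" using assms(1) by (simp add: algebra_simps)
  have re: "Re (x * cnj g) = (cmod g)^2 + s * KK g v"
  proof -
    have "Re (x * cnj g) = Re (g * cnj g) + s * Re (v * cnj g)" unfolding xg by (simp add: algebra_simps)
    moreover have "Re (g * cnj g) = (cmod g)^2" using complex_norm_square[of g] by (metis Re_complex_of_real)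
    moreover have "Re (v * cnj g) = KK g v" by (simp add: KK_def mult.commute)
    ultimately show ?thesis by simp
  qed
  have N: "NN g x = - (PP g + 2 * KK g v * s) / PP g" unfolding NN_def re by (simp add: PP_def algebra_simps)
  define E where "E = complex_of_real (PP g + 2 * KK g v * s)"
  have E0: "E \<noteq> 0" unfolding E_def by (metis assms(2) of_real_eq_0_iff)
  have P0: "complex_of_real (PP g) \<noteq> 0" using assms(3) by simp
  have N': "complex_of_real (NN g x) = - E / of_real (PP g)" unfolding N E_def by simp
  have t1: "TT g x = g - of_real (PP g) * of_real s * v / E"
    unfolding TT_def N' assms(1) using E0 P0 by (simp add: field_simps)
  show t2: "TT g x = g + of_real (- PP g * s / (PP g + 2 * KK g v * s)) * v"
    unfolding t1 E_def by (simp add: field_simps)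
  have D: "DD g v x = cnj v * E" unfolding E_def by (rule DD_line[OF assms(1)])
  have c: "cnj (x - g) = of_real s * cnj v" using arg_cong[OF assms(1), of cnj] by simp
  show "TT g x = FF g v x" unfolding t1 FF_def D c using E0 assms(4) by (simp add: field_simps)
qed


lemma line_mem: "z \<in> line_through p q \<longleftrightarrow> (\<exists>t. z = p + of_real t * (q - p))"
  unfolding line_through_def by auto

lemma LIS_eq:
  assumes "z0 \<in> line_through p q" "z0 \<in> line_through r s"
    "\<And>z. z \<in> line_through p q \<Longrightarrow> z \<in> line_through r s \<Longrightarrow> z = z0"
  shows "LIS p q r s = z0"
  unfolding LIS_def
proof (rule the_equality)
  show "z0 \<in> line_through p q \<and> z0 \<in> line_through r s" using assms(1,2) by blast
next
  fix z assume "z \<in> line_through p q \<and> z \<in> line_through r s"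
  then show "z = z0" using assms(3) by blast
qed

lemma Im_affine:
  "Im (cnj v * (p + of_real t * (q - p) - g)) = Im (cnj v * (p - g)) + t * (Im (cnj v * (q - g)) - Im (cnj v * (p - g)))"
  by (simp add: algebra_simps)

lemma LIS_nonpar:
  assumes "p \<noteq> q" "r \<noteq> s" "\<not> lines_parallel p q r s"
  shows "LIS p q r s \<in> line_through p q" "LIS p q r s \<in> line_through r s"
proof -
  define u where "u = q - p"
  define w where "w = s - r"
  have u0: "u \<noteq> 0" and w0: "w \<noteq> 0" using assms u_def w_def by auto
  have I: "Im (cnj w * u) \<noteq> 0"
  proof
    assume "Im (cnj w * u) = 0"
    moreover have "Im (cnj u * w) = - Im (cnj w * u)" by (simp add: algebra_simps)
    ultimately have "Im (cnj u * w) = 0" by simp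
    then have "w = of_real (Re (cnj u * w) / (cmod u)^2) * u" using real_mult_of u0 by blast
    then show False using assms(3) unfolding lines_parallel_def u_def w_def by blast
  qed
  define t1 where "t1 = Im (cnj w * (r - p)) / Im (cnj w * u)"
  define z0 where "z0 = p + of_real t1 * u"
  have z1: "z0 \<in> line_through p q" unfolding line_mem z0_def u_def by blast
  have "Im (cnj w * (z0 - r)) = Im (cnj w * (p - r)) + t1 * Im (cnj w * u)"
    unfolding z0_def by (simp add: algebra_simps)
  also have "\<dots> = 0"
  proof -
    have "t1 * Im (cnj w * u) = Im (cnj w * (r - p))" unfolding t1_def using I by simp
    moreover have "Im (cnj w * (p - r)) = - Im (cnj w * (r - p))" by (simp add: algebra_simps)
    ultimately show ?thesis by simp
  qed
  finally have "z0 - r = of_real (Re (cnj w * (z0 - r)) / (cmod w)^2) * w" using real_mult_of w0 by blast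
  then have "z0 = r + of_real (Re (cnj w * (z0 - r)) / (cmod w)^2) * (s - r)" unfolding w_def by (simp add: algebra_simps)
  then have z2: "z0 \<in> line_through r s" unfolding line_mem by blast
  have uniq: "z = z0" if H: "z \<in> line_through p q" "z \<in> line_through r s" for z
  proof -
    obtain ta where ta: "z = p + of_real ta * u" using H(1) unfolding line_mem u_def by blast
    obtain tb where tb: "z = r + of_real tb * w" using H(2) unfolding line_mem w_def by blast
    obtain ta' where ta': "z0 = p + of_real ta' * u" using z1 unfolding line_mem u_def by blast
    obtain tb' where tb': "z0 = r + of_real tb' * w" using z2 unfolding line_mem w_def by blast
    have e1: "z - z0 = of_real (ta - ta') * u" using ta ta' by (simp add: algebra_simps)
    have e2: "z - z0 = of_real (tb - tb') * w" using tb tb' by (simp add: algebra_simps)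
    have e: "of_real (ta - ta') * u = of_real (tb - tb') * w" using e1 e2 by simp
    show ?thesis
    proof (cases "ta = ta'")
      case True then show ?thesis using ta ta' by simp
    next
      case False
      then have "tb \<noteq> tb'" using e u0 by auto
      then have ne: "complex_of_real (tb - tb') \<noteq> 0" by simp
      have "w = of_real (tb - tb') * w / of_real (tb - tb')" using ne by simp
      also have "\<dots> = of_real (ta - ta') * u / of_real (tb - tb')" using e by simp
      also have "\<dots> = of_real ((ta - ta') / (tb - tb')) * u" by simp
      finally have "w = of_real ((ta - ta') / (tb - tb')) * u" .
      then show ?thesis using assms(3) unfolding lines_parallel_def u_def w_def by blast
    qed
  qed
  have "LIS p q r s = z0" using LIS_eq[OF z1 z2 uniq] by blast
  then show "LIS p q r s \<in> line_through p q" "LIS p q r s \<in> line_through r s" using z1 z2 by auto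
qed

lemma LIS_side:
  assumes "g \<noteq> h"
    and sg: "Im (cnj (h - g) * (p - g)) * Im (cnj (h - g) * (q - g)) < 0"
  shows "\<exists>\<rho>. 0 < \<rho> \<and> \<rho> < 1 \<and> LIS g h p q = p + of_real \<rho> * (q - p)"
        "LIS g h p q \<in> line_through g h"
        "\<And>z. z \<in> line_through g h \<Longrightarrow> z \<in> line_through p q \<Longrightarrow> z = LIS g h p q"
proof -
  define v where "v = h - g"
  have v0: "v \<noteq> 0" using assms(1) v_def by simp
  define sp where "sp = Im (cnj v * (p - g))"
  define sq where "sq = Im (cnj v * (q - g))"
  have sg': "sp * sq < 0" using sg sp_def sq_def v_def by simp
  have d: "sp - sq \<noteq> 0" using sg' by auto
  define \<rho> where "\<rho> = sp / (sp - sq)"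
  have \<rho>: "0 < \<rho>" "\<rho> < 1"
  proof -
    have "(sp > 0 \<and> sq < 0) \<or> (sp < 0 \<and> sq > 0)" using sg' by (auto simp: mult_less_0_iff)
    then show "0 < \<rho>" "\<rho> < 1" unfolding \<rho>_def by (auto simp: divide_simps)
  qed
  define z0 where "z0 = p + of_real \<rho> * (q - p)"
  have "Im (cnj v * (z0 - g)) = sp + \<rho> * (sq - sp)" unfolding z0_def Im_affine sp_def sq_def ..
  also have "\<dots> = 0" unfolding \<rho>_def using d by (simp add: field_simps)
  finally have "z0 - g = of_real (Re (cnj v * (z0 - g)) / (cmod v)^2) * v" using real_mult_of v0 by blast
  then have "z0 = g + of_real (Re (cnj v * (z0 - g)) / (cmod v)^2) * (h - g)" unfolding v_def by (simp add: algebra_simps)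
  then have z1: "z0 \<in> line_through g h" unfolding line_mem by blast
  have z2: "z0 \<in> line_through p q" unfolding line_mem z0_def by blast
  have uniq: "z = z0" if H: "z \<in> line_through g h" "z \<in> line_through p q" for z
  proof -
    obtain ta where ta: "z = g + of_real ta * v" using H(1) unfolding line_mem v_def by blast
    obtain tb where tb: "z = p + of_real tb * (q - p)" using H(2) unfolding line_mem by blast
    have "Im (cnj v * (z - g)) = 0" unfolding ta by (simp add: algebra_simps)
    moreover have "Im (cnj v * (z - g)) = sp + tb * (sq - sp)" unfolding tb Im_affine sp_def sq_def ..
    ultimately have "tb = \<rho>" unfolding \<rho>_def using d by (simp add: field_simps)
    then show ?thesis using tb z0_def by simp
  qed
  have L: "LIS g h p q = z0" using LIS_eq[OF z1 z2 uniq] by blast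
  show "\<exists>\<rho>. 0 < \<rho> \<and> \<rho> < 1 \<and> LIS g h p q = p + of_real \<rho> * (q - p)" using L \<rho> z0_def by blast
  show "LIS g h p q \<in> line_through g h" using L z1 by simp
  show "\<And>z. z \<in> line_through g h \<Longrightarrow> z \<in> line_through p q \<Longrightarrow> z = LIS g h p q" using L uniq by simp
qed


lemma cos_lt_alpha:
  assumes "0 < \<alpha>" "\<alpha> < pi" "\<alpha> < x" "x < 2 * pi - \<alpha>"
  shows "cos x < cos \<alpha>"
proof (cases "x \<le> pi")
  case True then show ?thesis using cos_monotone_0_pi[of \<alpha> x] assms by simp
next
  case False
  have "cos (2 * pi - x) < cos \<alpha>" using cos_monotone_0_pi[of \<alpha> "2 * pi - x"] assms False by simp
  moreover have "cos (2 * pi - x) = cos x"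
    by (simp add: cos_diff)
  ultimately show ?thesis by simp
qed

lemma Re_cis_cnj: "Re (cis \<theta> * cnj (cis m)) = cos (\<theta> - m)"
  by (simp add: cis_cnj cis_mult)

lemma chord_side:
  assumes "s1 < s2" "s2 < s1 + 2 * pi" "s2 < \<theta>" "\<theta> < s1 + 2 * pi"
  shows "Re (cis \<theta> * cnj (cis ((s1 + s2) / 2))) < cos ((s2 - s1) / 2)"
  unfolding Re_cis_cnj by (rule cos_lt_alpha) (use assms in \<open>auto simp: field_simps\<close>)

lemma chord_end:
  "Re (cis s1 * cnj (cis ((s1 + s2) / 2))) = cos ((s2 - s1) / 2)"
  "Re (cis s2 * cnj (cis ((s1 + s2) / 2))) = cos ((s2 - s1) / 2)"
proof -
  have eq1: "s1 - (s1 + s2) / 2 = - ((s2 - s1) / 2)" by (simp add: field_simps)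
  have "cos (s1 - (s1 + s2) / 2) = cos ((s2 - s1) / 2)" unfolding eq1 by (rule cos_minus)
  then show "Re (cis s1 * cnj (cis ((s1 + s2) / 2))) = cos ((s2 - s1) / 2)" unfolding Re_cis_cnj .
  have eq: "s2 - (s1 + s2) / 2 = (s2 - s1) / 2" by (simp add: field_simps)
  show "Re (cis s2 * cnj (cis ((s1 + s2) / 2))) = cos ((s2 - s1) / 2)" unfolding Re_cis_cnj eq by (rule refl)
qed

lemma cis_inj:
  assumes "s < t" "t < s + 2 * pi"
  shows "cis s \<noteq> cis t"
proof
  assume e: "cis s = cis t"
  have "cis (t - s) = cis t / cis s" by (simp add: cis_divide)
  also have "\<dots> = 1" using e by simp
  finally have "cos (t - s) = 1" by (metis Re_complex_of_real cis.sel(1) of_real_1)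
  then obtain n :: int where n: "t - s = real_of_int n * (2 * pi)" using cos_one_2pi_int by (auto simp: mult.assoc)
  have p: "0 < 2 * pi" by simp
  have h1: "0 < t - s" and h2: "t - s < 1 * (2 * pi)" using assms by auto
  have "0 < real_of_int n * (2 * pi)" "real_of_int n * (2 * pi) < 1 * (2 * pi)" using h1 h2 unfolding n by auto
  then have "0 < real_of_int n" "real_of_int n < 1"
    using p by (auto simp: zero_less_mult_iff mult_less_cancel_right)
  then have "0 < n" "n < 1" by simp_all
  then show False by simp
qed


lemma cis_2pi_shift: "cis (t + 2 * pi) = cis t"
  by (simp add: cis_mult[symmetric])

lemma order_facts:
  assumes "in_circle_order a b c d"
  shows "\<exists>m C. cmod a = 1 \<and> cmod b = 1 \<and> cmod c = 1 \<and> cmod d = 1 \<and> a \<noteq> b \<and> c \<noteq> d \<and>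
     Re (a * cnj m) = C \<and> Re (b * cnj m) = C \<and> Re (c * cnj m) < C \<and> Re (d * cnj m) < C"
proof -
  obtain s t u w where o: "s < t" "t < u" "u < w" "w < s + 2 * pi"
    and cs: "(a = cis s \<and> b = cis t \<and> c = cis u \<and> d = cis w) \<or>
        (d = cis s \<and> c = cis t \<and> b = cis u \<and> a = cis w)"
    using assms unfolding in_circle_order_def by blast
  from cs show ?thesis
  proof
    assume H: "a = cis s \<and> b = cis t \<and> c = cis u \<and> d = cis w"
    show ?thesis
    proof (intro exI conjI)
      show "cmod a = 1" "cmod b = 1" "cmod c = 1" "cmod d = 1" using H by auto
      show "a \<noteq> b" using H cis_inj[of s t] o by auto
      show "c \<noteq> d" using H cis_inj[of u w] o by auto
      show "Re (a * cnj (cis ((s + t) / 2))) = cos ((t - s) / 2)" using H chord_end by simp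
      show "Re (b * cnj (cis ((s + t) / 2))) = cos ((t - s) / 2)" using H chord_end by simp
      show "Re (c * cnj (cis ((s + t) / 2))) < cos ((t - s) / 2)" using H chord_side[of s t u] o by simp
      show "Re (d * cnj (cis ((s + t) / 2))) < cos ((t - s) / 2)" using H chord_side[of s t w] o by simp
    qed
  next
    assume H: "d = cis s \<and> c = cis t \<and> b = cis u \<and> a = cis w"
    have c2: "c = cis (t + 2 * pi)" "d = cis (s + 2 * pi)" using H cis_2pi_shift by auto
    show ?thesis
    proof (intro exI conjI)
      show "cmod a = 1" "cmod b = 1" "cmod c = 1" "cmod d = 1" using H by auto
      show "a \<noteq> b" using H cis_inj[of u w] o by auto
      show "c \<noteq> d" using H cis_inj[of s t] o by auto
      show "Re (a * cnj (cis ((u + w) / 2))) = cos ((w - u) / 2)" using H chord_end by simp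
      show "Re (b * cnj (cis ((u + w) / 2))) = cos ((w - u) / 2)" using H chord_end by simp
      show "Re (c * cnj (cis ((u + w) / 2))) < cos ((w - u) / 2)" unfolding c2 by (rule chord_side) (use o in auto)
      show "Re (d * cnj (cis ((u + w) / 2))) < cos ((w - u) / 2)" unfolding c2 by (rule chord_side) (use o in auto)
    qed
  qed
qed


lemma e_neg:
  assumes "x = g + of_real s * v" "cmod x < 1"
  shows "PP g + 2 * KK g v * s < 0"
proof -
  have "(cmod x)^2 = (cmod g)^2 + 2 * s * KK g v + s^2 * (cmod v)^2"
    using norm_line_sq[of g s v] assms(1) by (simp add: KK_def)
  moreover have "2 * s * KK g v = 2 * KK g v * s" by simp
  moreover have "(cmod x)^2 < 1" using assms(2) by (simp add: power_less_one_iff abs_less_iff)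
  moreover have "s^2 * (cmod v)^2 \<ge> 0" by simp
  ultimately show ?thesis unfolding PP_def by linarith
qed

lemma on_line_data:
  assumes "x \<in> line_through g h" "cmod x < 1" "PP g > 0" "h \<noteq> g"
  shows "\<exists>s. x - g = of_real s * (h - g) \<and> PP g + 2 * KK g (h - g) * s < 0 \<and>
     TT g x = FF g (h - g) x \<and> TT g x \<in> line_through g h"
proof -
  obtain s where s: "x = g + of_real s * (h - g)" using assms(1) line_mem by blast
  have e: "PP g + 2 * KK g (h - g) * s < 0" by (rule e_neg[OF s assms(2)])
  have xs: "x - g = of_real s * (h - g)" using s by simp
  have tf: "TT g x = FF g (h - g) x" "TT g x = g + of_real (- PP g * s / (PP g + 2 * KK g (h - g) * s)) * (h - g)"
    using TT_FF_line[OF xs] e assms(3,4) by auto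
  have "TT g x \<in> line_through g h" unfolding line_mem using tf(2) by blast
  then show ?thesis using xs e tf(1) by blast
qed

lemma sign3:
  fixes x y z :: real
  assumes "x * y > 0" "y * z < 0"
  shows "x * z < 0"
  using assms by (auto simp: zero_less_mult_iff mult_less_0_iff)


lemma core:
  fixes a b c d h m :: complex and C :: real
  assumes n: "cmod a = 1" "cmod b = 1" "cmod c = 1" "cmod d = 1"
    and ab: "a \<noteq> b" and cd: "c \<noteq> d"
    and sa: "Re (a * cnj m) = C" and sb: "Re (b * cnj m) = C"
    and sc: "Re (c * cnj m) < C" and sd: "Re (d * cnj m) < C"
    and np: "\<not> lines_parallel a b c d" and hs: "h \<in> open_segment b c"
  shows "let g = LIS a b c d; j = LIS g h a c; k = LIS g h b d; l = LIS g h a d in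
           visual_angle_metric h j = visual_angle_metric k l \<and>
           visual_angle_metric h k = visual_angle_metric j l"
proof -
  define g where "g = LIS a b c d"
  have gab: "g \<in> line_through a b" and gcd: "g \<in> line_through c d"
    using LIS_nonpar[OF ab cd np] g_def by auto
  obtain r1 where r1: "g = a + of_real r1 * (b - a)" using gab line_mem by blast
  obtain r2 where r2: "g = c + of_real r2 * (d - c)" using gcd line_mem by blast
  have aff: "Re ((p + of_real t * (q - p)) * cnj m) = (1 - t) * Re (p * cnj m) + t * Re (q * cnj m)"
    for p q :: complex and t :: real by (simp add: algebra_simps)
  have fg: "Re (g * cnj m) = C" unfolding r1 aff sa sb by (simp add: algebra_simps)
  have dc0: "(cmod (d - c))^2 > 0" using cd by simp
  have ba0: "(cmod (b - a))^2 > 0" using ab by simp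
  have g1: "cmod g > 1"
  proof (rule ccontr)
    assume "\<not> cmod g > 1"
    then have "(cmod g)^2 \<le> 1" by (simp add: power_le_one)
    then have "r2 * (r2 - 1) * (cmod (d - c))^2 \<le> 0" using chord_norm[OF n(3,4), of r2] r2 by simp
    then have "r2 * (r2 - 1) \<le> 0" using dc0 by (simp add: mult_le_0_iff)
    then have r2b: "0 \<le> r2" "r2 \<le> 1" by (auto simp: mult_le_0_iff)
    have "Re (g * cnj m) = (1 - r2) * Re (c * cnj m) + r2 * Re (d * cnj m)" unfolding r2 aff ..
    also have "\<dots> < (1 - r2) * C + r2 * C"
    proof (cases "r2 = 0")
      case True then show ?thesis using sc by simp
    next
      case False
      then have "r2 > 0" using r2b by simp
      then have "r2 * Re (d * cnj m) < r2 * C" using sd by simp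
      moreover have "(1 - r2) * Re (c * cnj m) \<le> (1 - r2) * C" using sc r2b by (simp add: mult_left_mono)
      ultimately show ?thesis by simp
    qed
    also have "\<dots> = C" by (simp add: algebra_simps)
    finally show False using fg by simp
  qed
  have g2: "(cmod g)^2 > 1" using one_less_power[OF g1, of 2] by simp
  have P: "PP g > 0" using g2 unfolding PP_def by simp
  have rr1: "r1 * (r1 - 1) > 0"
  proof -
    have "(cmod g)^2 = 1 + r1 * (r1 - 1) * (cmod (b - a))^2" using chord_norm[OF n(1,2), of r1] r1 by simp
    then have "r1 * (r1 - 1) * (cmod (b - a))^2 > 0" using g2 by simp
    then show ?thesis using ba0 by (simp add: zero_less_mult_iff)
  qed
  have rr2: "r2 * (r2 - 1) > 0"
  proof -
    have "(cmod g)^2 = 1 + r2 * (r2 - 1) * (cmod (d - c))^2" using chord_norm[OF n(3,4), of r2] r2 by simp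
    then have "r2 * (r2 - 1) * (cmod (d - c))^2 > 0" using g2 by simp
    then show ?thesis using dc0 by (simp add: zero_less_mult_iff)
  qed
  obtain \<theta> where \<theta>: "0 < \<theta>" "\<theta> < 1" "h = (1 - \<theta>) *\<^sub>R b + \<theta> *\<^sub>R c" and bc: "b \<noteq> c"
    using hs unfolding in_segment by blast
  have h\<theta>: "h = b + of_real \<theta> * (c - b)" using \<theta>(3) by (simp add: scaleR_conv_of_real algebra_simps)
  have cb0: "(cmod (c - b))^2 > 0" using bc by simp
  have hn: "cmod h < 1"
  proof -
    have "(cmod h)^2 = 1 + \<theta> * (\<theta> - 1) * (cmod (c - b))^2" using chord_norm[OF n(2,3), of \<theta>] h\<theta> by simp
    moreover have "\<theta> * (\<theta> - 1) * (cmod (c - b))^2 < 0" using \<theta> cb0 by (simp add: mult_neg_pos mult_pos_neg)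
    ultimately have "(cmod h)^2 < 1" by simp
    then show ?thesis by (simp add: power_less_one_iff abs_less_iff)
  qed
  have hg: "h \<noteq> g" using hn g1 by auto
  have gh: "g \<noteq> h" using hg by simp
  define v where "v = h - g"
  have v0: "v \<noteq> 0" using hg v_def by simp
  define \<sigma> where "\<sigma> x = Im (cnj v * (x - g))" for x
  define I1 where "I1 = Im (cnj v * (b - a))"
  define I2 where "I2 = Im (cnj v * (d - c))"
  have \<sigma>a: "\<sigma> a = - r1 * I1" unfolding \<sigma>_def I1_def r1 by (simp add: algebra_simps)
  have \<sigma>b: "\<sigma> b = (1 - r1) * I1" unfolding \<sigma>_def I1_def r1 by (simp add: algebra_simps)
  have \<sigma>c: "\<sigma> c = - r2 * I2" unfolding \<sigma>_def I2_def r2 by (simp add: algebra_simps)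
  have \<sigma>d: "\<sigma> d = (1 - r2) * I2" unfolding \<sigma>_def I2_def r2 by (simp add: algebra_simps)
  have \<sigma>h: "\<sigma> b + \<theta> * (\<sigma> c - \<sigma> b) = 0"
  proof -
    have "\<sigma> h = 0" unfolding \<sigma>_def v_def by (simp add: algebra_simps)
    then show ?thesis unfolding \<sigma>_def using Im_affine[of v b \<theta> c g] h\<theta> by simp
  qed
  have \<sigma>b0: "\<sigma> b \<noteq> 0"
  proof
    assume z: "\<sigma> b = 0"
    have I10: "I1 = 0" using z \<sigma>b rr1 by auto
    have za: "\<sigma> a = 0" using \<sigma>a I10 by simp
    have zc: "\<sigma> c = 0" using \<sigma>h z \<theta>(1) by simp
    have lin: "x - g = of_real (Re (cnj v * (x - g)) / (cmod v)^2) * v" if "\<sigma> x = 0" for x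
    proof -
      have "Im (cnj v * (x - g)) = 0" using that unfolding \<sigma>_def .
      then show ?thesis using real_mult_of v0 by blast
    qed
    define sa' where "sa' = Re (cnj v * (a - g)) / (cmod v)^2"
    define sb' where "sb' = Re (cnj v * (b - g)) / (cmod v)^2"
    define sc' where "sc' = Re (cnj v * (c - g)) / (cmod v)^2"
    have xa: "a = g + of_real sa' * v" using lin[OF za] sa'_def by (simp add: algebra_simps)
    have xb: "b = g + of_real sb' * v" using lin[OF z] sb'_def by (simp add: algebra_simps)
    have xc: "c = g + of_real sc' * v" using lin[OF zc] sc'_def by (simp add: algebra_simps)
    have fl: "Re ((g + of_real s * v) * cnj m) = C + s * Re (v * cnj m)" for s
      using fg by (simp add: algebra_simps)
    have "sa' \<noteq> sb'" using ab xa xb by auto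
    moreover have "sa' * Re (v * cnj m) = 0" "sb' * Re (v * cnj m) = 0"
      using fl[of sa'] fl[of sb'] sa sb xa xb by auto
    ultimately have "Re (v * cnj m) = 0" by auto
    then have "Re (c * cnj m) = C" using fl[of sc'] xc by simp
    then show False using sc by simp
  qed
  have bc_neg: "\<sigma> b * \<sigma> c < 0"
  proof -
    have e1: "\<theta> * \<sigma> c = - ((1 - \<theta>) * \<sigma> b)" using \<sigma>h by (simp add: algebra_simps)
    have e2: "\<theta> * (\<sigma> b * \<sigma> c) = - ((1 - \<theta>) * (\<sigma> b)^2)"
      using arg_cong[OF e1, of "\<lambda>x. \<sigma> b * x"] by (simp add: algebra_simps power2_eq_square)
    have "(1 - \<theta>) * (\<sigma> b)^2 > 0" using \<theta> \<sigma>b0 by simp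
    then have "\<theta> * (\<sigma> b * \<sigma> c) < 0" using e2 by simp
    then show ?thesis using \<theta>(1) by (simp add: mult_less_0_iff)
  qed
  have I1n: "I1 \<noteq> 0" using \<sigma>b \<sigma>b0 by auto
  have I2n: "I2 \<noteq> 0" using \<sigma>c bc_neg by auto
  have ab_pos: "\<sigma> a * \<sigma> b > 0"
  proof -
    have "\<sigma> a * \<sigma> b = (r1 * (r1 - 1)) * I1^2" unfolding \<sigma>a \<sigma>b by (simp add: power2_eq_square algebra_simps)
    then show ?thesis using rr1 I1n by simp
  qed
  have cd_pos: "\<sigma> c * \<sigma> d > 0"
  proof -
    have "\<sigma> c * \<sigma> d = (r2 * (r2 - 1)) * I2^2" unfolding \<sigma>c \<sigma>d by (simp add: power2_eq_square algebra_simps)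
    then show ?thesis using rr2 I2n by simp
  qed
  have ac_neg: "\<sigma> a * \<sigma> c < 0" using sign3[OF ab_pos bc_neg] .
  have bd_neg: "\<sigma> b * \<sigma> d < 0" using cd_pos bc_neg by (auto simp: zero_less_mult_iff mult_less_0_iff)
  have ad_neg: "\<sigma> a * \<sigma> d < 0" using sign3[OF ab_pos bd_neg] .
  note side = LIS_side[OF gh]
  have ac: "Im (cnj (h - g) * (a - g)) * Im (cnj (h - g) * (c - g)) < 0" using ac_neg unfolding \<sigma>_def v_def .
  have bd: "Im (cnj (h - g) * (b - g)) * Im (cnj (h - g) * (d - g)) < 0" using bd_neg unfolding \<sigma>_def v_def .
  have ad: "Im (cnj (h - g) * (a - g)) * Im (cnj (h - g) * (d - g)) < 0" using ad_neg unfolding \<sigma>_def v_def .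
  define j where "j = LIS g h a c"
  define k where "k = LIS g h b d"
  define l where "l = LIS g h a d"
  obtain \<rho>j where \<rho>j: "0 < \<rho>j" "\<rho>j < 1" "j = a + of_real \<rho>j * (c - a)" using side(1)[OF ac] j_def by blast
  obtain \<rho>k where \<rho>k: "0 < \<rho>k" "\<rho>k < 1" "k = b + of_real \<rho>k * (d - b)" using side(1)[OF bd] k_def by blast
  obtain \<rho>l where \<rho>l: "0 < \<rho>l" "\<rho>l < 1" "l = a + of_real \<rho>l * (d - a)" using side(1)[OF ad] l_def by blast
  have jL: "j \<in> line_through g h" using side(2)[OF ac] j_def by simp
  have kL: "k \<in> line_through g h" using side(2)[OF bd] k_def by simp
  have lL: "l \<in> line_through g h" using side(2)[OF ad] l_def by simp
  have hL: "h \<in> line_through g h" unfolding line_mem by (rule exI[of _ 1]) simp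
  have inside: "cmod (p + of_real \<rho> * (q - p)) < 1" if "cmod p = 1" "cmod q = 1" "p \<noteq> q" "0 < \<rho>" "\<rho> < 1" for p q \<rho>
  proof -
    have "(cmod (p + of_real \<rho> * (q - p)))^2 = 1 + \<rho> * (\<rho> - 1) * (cmod (q - p))^2" using chord_norm that(1,2) by blast
    moreover have "\<rho> * (\<rho> - 1) * (cmod (q - p))^2 < 0" using that(3-5) by (simp add: mult_neg_pos mult_pos_neg)
    ultimately have "(cmod (p + of_real \<rho> * (q - p)))^2 < 1" by simp
    then show ?thesis by (simp add: power_less_one_iff abs_less_iff)
  qed
  have ac': "a \<noteq> c" using sa sc by auto
  have bd': "b \<noteq> d" using sb sd by auto
  have ad': "a \<noteq> d" using sa sd by auto
  have jn: "cmod j < 1" using inside[OF n(1,3) ac' \<rho>j(1,2)] \<rho>j(3) by simp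
  have kn: "cmod k < 1" using inside[OF n(2,4) bd' \<rho>k(1,2)] \<rho>k(3) by simp
  have ln: "cmod l < 1" using inside[OF n(1,4) ad' \<rho>l(1,2)] \<rho>l(3) by simp
  obtain sh where sh: "h - g = of_real sh * v" "PP g + 2 * KK g v * sh < 0" "TT g h = FF g v h" "TT g h \<in> line_through g h"
    using on_line_data[OF hL hn P hg] v_def by blast
  obtain sj where sj: "j - g = of_real sj * v" "PP g + 2 * KK g v * sj < 0" "TT g j = FF g v j" "TT g j \<in> line_through g h"
    using on_line_data[OF jL jn P hg] v_def by blast
  obtain sk where sk: "k - g = of_real sk * v" "PP g + 2 * KK g v * sk < 0" "TT g k = FF g v k" "TT g k \<in> line_through g h"
    using on_line_data[OF kL kn P hg] v_def by blast
  have P0: "PP g \<noteq> 0" using P by simp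
  have NNp: "NN g x \<noteq> 0" if "cmod x \<le> 1" for x
  proof -
    have "x \<noteq> g" using that g1 by auto
    then show ?thesis using NN_pos[OF that _ P] by auto
  qed
  have Ta: "TT g a = b" by (rule TT_vieta[OF n(1,2) ab r1 g1])
  have Tb: "TT g b = a"
    by (rule TT_vieta[OF n(2,1) ab[symmetric] _ g1, of "1 - r1"]) (simp add: r1 algebra_simps)
  have Tc: "TT g c = d" by (rule TT_vieta[OF n(3,4) cd r2 g1])
  have Td: "TT g d = c"
    by (rule TT_vieta[OF n(4,3) cd[symmetric] _ g1, of "1 - r2"]) (simp add: r2 algebra_simps)
  have TTj: "TT g j \<in> line_through b d"
  proof -
    have "TT g j = TT g a + of_real (\<rho>j * NN g c / NN g j) * (TT g c - TT g a)"
      unfolding \<rho>j(3) by (rule TT_coll[OF P0 NNp NNp NNp]) (use n \<rho>j(3) jn in auto)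
    then show ?thesis unfolding Ta Tc line_mem by blast
  qed
  have TTh: "TT g h \<in> line_through a d"
  proof -
    have "TT g h = TT g b + of_real (\<theta> * NN g c / NN g h) * (TT g c - TT g b)"
      unfolding h\<theta> by (rule TT_coll[OF P0 NNp NNp NNp]) (use n h\<theta> hn in auto)
    then show ?thesis unfolding Tb Tc line_mem by blast
  qed
  have TTk: "TT g k \<in> line_through a c"
  proof -
    have "TT g k = TT g b + of_real (\<rho>k * NN g d / NN g k) * (TT g d - TT g b)"
      unfolding \<rho>k(3) by (rule TT_coll[OF P0 NNp NNp NNp]) (use n \<rho>k(3) kn in auto)
    then show ?thesis unfolding Tb Td line_mem by blast
  qed
  have Fj: "FF g v j = k" using side(3)[OF bd sj(4) TTj] sj(3) k_def by simp
  have Fh: "FF g v h = l" using side(3)[OF ad sh(4) TTh] sh(3) l_def by simp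
  have Fk: "FF g v k = j" using side(3)[OF ac sk(4) TTk] sk(3) j_def by simp
  have e_hj: "(PP g + 2 * KK g v * sh) * (PP g + 2 * KK g v * sj) > 0" using sh(2) sj(2) by (simp add: mult_neg_neg)
  have e_hk: "(PP g + 2 * KK g v * sh) * (PP g + 2 * KK g v * sk) > 0" using sh(2) sk(2) by (simp add: mult_neg_neg)
  have 1: "visual_angle_metric h j = visual_angle_metric k l"
  proof -
    have "visual_angle_metric h j = visual_angle_metric (FF g v h) (FF g v j)"
      using vam_FF[OF P v0 sh(1) sj(1) e_hj] by simp
    also have "\<dots> = visual_angle_metric l k" unfolding Fh Fj ..
    finally show ?thesis using vam_sym by simp
  qed
  have 2: "visual_angle_metric h k = visual_angle_metric j l"
  proof -
    have "visual_angle_metric h k = visual_angle_metric (FF g v h) (FF g v k)"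
      using vam_FF[OF P v0 sh(1) sk(1) e_hk] by simp
    also have "\<dots> = visual_angle_metric l j" unfolding Fh Fk ..
    finally show ?thesis using vam_sym by simp
  qed
  show ?thesis unfolding Let_def using 1 2 g_def j_def k_def l_def by simp
qed


theorem mainTheorem4:
  fixes a b c d h :: complex
  assumes "in_circle_order a b c d"
    and "\<not> lines_parallel a b c d"
    and "h \<in> open_segment b c"
  shows "let g = LIS a b c d; j = LIS g h a c; k = LIS g h b d; l = LIS g h a d in
           visual_angle_metric h j = visual_angle_metric k l \<and>
           visual_angle_metric h k = visual_angle_metric j l"
proof -
  obtain m C where f: "cmod a = 1" "cmod b = 1" "cmod c = 1" "cmod d = 1" "a \<noteq> b" "c \<noteq> d"
     "Re (a * cnj m) = C" "Re (b * cnj m) = C" "Re (c * cnj m) < C" "Re (d * cnj m) < C"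
    using order_facts[OF assms(1)] by blast
  show ?thesis by (rule core[OF f assms(2) assms(3)])
qed

end
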